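(* Let $(\lambda,\nu,s)$ be a co-Pieri triple and let $n$ be sufficiently large compared with $r=|\lambda|+s$. For every partition $\alpha\vdash n-s$ with $\alpha\subseteq\lambda_{[n]}\cap\nu_{[n]}$, every element of $\mathrm{Std}_s(\nu_{[n]}\setminus\alpha)$ has the form $\mathsf p=(-\varepsilon_0,+\varepsilon_{j_1},\dots,-\varepsilon_0,+\varepsilon_{j_s})$ and every element of $\mathrm{Std}_s(\alpha\setminus\lambda_{[n]})$ has the form $\mathsf q=(-\varepsilon_{i_1},+\varepsilon_0,\dots,-\varepsilon_{i_s},+\varepsilon_0)$, with all $i_l,j_l\ge1$, and the rule $$\varphi_s(\mathsf p,\mathsf q)=(-\varepsilon_{i_1-1},+\varepsilon_{j_1-1},-\varepsilon_{i_2-1},+\varepsilon_{j_2-1},\dots,-\varepsilon_{i_s-1},+\varepsilon_{j_s-1})$$ defines a bijection $$\varphi_s:\bigsqcup_{\substack{\alpha\vdash n-s\\ \alpha\subseteq\lambda_{[n]}\cap\nu_{[n]}}}\mathrm{Std}_s(\nu_{[n]}\setminus\alpha)\times\mathrm{Std}_s(\alpha\setminus\lambda_{[n]})\longrightarrow\mathrm{Std}^+_s(\nu\setminus\lambda).$$ Moreover, for every $\mathsf u=\varphi_s(\mathsf p,\mathsf q)\in\mathrm{Std}^+_s(\nu\setminus\lambda)$ and every $1\le k\le s-1$, the tableaux $\mathsf p_{k\leftrightarrow k+1},\mathsf q_{k\leftrightarrow k+1}$ exist and $\varphi_s(\mathsf p_{k\leftrightarrow k+1},\mathsf q_{k\leftrightarrow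 k+1})=\mathsf u_{k\leftrightarrow k+1}\in\mathrm{Std}^+_s(\nu\setminus\lambda)$; hence $\mathsf u_{k\leftrightarrow k+1}$ exists for every $\mathsf u\in\mathrm{Std}^0_s(\nu\setminus\lambda)$ and every $1\le k\le s-1$.
   Context: For a partition $\lambda$: $|\lambda|$ size, $\ell(\lambda)$ number of nonzero parts; $\lambda_{[n]}=(n-|\lambda|,\lambda_1,\lambda_2,\dots)$. $\lambda\cap\nu$ is the componentwise minimum; for $\alpha\subseteq\beta$, $\beta\ominus\alpha$ is the difference of Young diagrams. $\pm\varepsilon_i$ ($i\ge1$) adds/removes a box in row $i$, $\varepsilon_0=0$. For partitions $\lambda,\nu$ and $s\ge0$ with $|\nu|\le|\lambda|+s$, $\mathrm{Std}_s(\nu\setminus\lambda)$ is the set of sequences $\mathsf t=(-\varepsilon_{i_1},+\varepsilon_{j_1},\dots,-\varepsilon_{i_s},+\varepsilon_{j_s})$, $i_k,j_k\ge0$, such that with $\mathsf t(0)=\lambda$, $\mathsf t(k-\frac12)=\mathsf t(k-1)-\varepsilon_{i_k}$, $\mathsf t(k)=\mathsf t(k-\frac12)+\varepsilon_{j_k}$ all are partitions and $\mathsf t(s)=\nu$; $(-\varepsilon_{i_k},+\varepsilon_{j_k})$ is the $k$-th integral step. $\mathrm{Std}^+_s(\nu\setminus\lambda)$ is the subset with $\#\{k:i_k=i\}\le\lambda_i$ for all $i\ge1$; $\mathrm{Std}^0_s(\nu\setminus\lambda)$ is the subset of $\mathrm{Std}^+_s(\nu\setminus\lambda)$ of those with no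 integral step $(-\varepsilon_0,+\varepsilon_0)$. $\mathsf t_{k\leftrightarrow k+1}$ is obtained by interchanging the $k$-th and $(k+1)$-th integral steps; it exists if it again lies in $\mathrm{Std}_s$ of the same shape. A co-Pieri triple is $(\lambda,\nu,s)$ with $|\nu|\le|\lambda|+s$, $\mathrm{Std}^0_s(\nu\setminus\lambda)\ne\emptyset$ and: $s=1$, or $s>1$ and, if $\max\{\ell(\lambda),\ell(\nu)\}\ge2$, $s\le\max\{|\lambda\ominus(\lambda\cap\nu)|,|\nu\ominus(\lambda\cap\nu)|\}+\min_{2\le i\le\max\{\ell(\lambda),\ell(\nu)\}}(\min\{\lambda_{i-1},\nu_{i-1}\}-\max\{\lambda_i,\nu_i\})$. *)

theory Defs
  imports Main
begin

text \<open>A partition is encoded as a function nat => nat: the value at i >= 1 is the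
  i-th row length; the value at 0 is required to be 0 (so the encoding is unique).\<close>
type_synonym partition = "nat \<Rightarrow> nat"

definition is_partition :: "partition \<Rightarrow> bool" where
  "is_partition la \<longleftrightarrow> la 0 = 0 \<and> (\<forall>i\<ge>1. la (Suc i) \<le> la i) \<and> finite {i. la i \<noteq> 0}"

definition psize :: "partition \<Rightarrow> nat" where
  "psize la = (\<Sum>i\<in>{i. la i \<noteq> 0}. la i)"

definition plength :: "partition \<Rightarrow> nat" where
  "plength la = card {i. 1 \<le> i \<and> la i \<noteq> 0}"

definition shift_part :: "nat \<Rightarrow> partition \<Rightarrow> partition" where
  "shift_part n la = (\<lambda>i. if i = 0 then 0 else if i = 1 then n - psize la else la (i - 1))"

definition pinter :: "partition \<Rightarrow> partition \<Rightarrow> partition" where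
  "pinter la nu = (\<lambda>i. min (la i) (nu i))"

definition psubseteq :: "partition \<Rightarrow> partition \<Rightarrow> bool" where
  "psubseteq al be \<longleftrightarrow> (\<forall>i. al i \<le> be i)"

definition skew_size :: "partition \<Rightarrow> partition \<Rightarrow> nat" where
  "skew_size be al = psize be - psize al"

text \<open>- eps_i and + eps_i (eps_0 = 0)\<close>
definition rem_box :: "partition \<Rightarrow> nat \<Rightarrow> partition" where
  "rem_box la i = (if i = 0 then la else la(i := la i - 1))"

definition add_box :: "partition \<Rightarrow> nat \<Rightarrow> partition" where
  "add_box la i = (if i = 0 then la else la(i := Suc (la i)))"

text \<open>A sequence of integral steps is a list of pairs (i_k, j_k), meaning
  (-eps_{i_k}, +eps_{j_k}). valid_walk la t nu: starting from la, all intermediate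
  shapes are partitions (removals are genuine removals) and the walk ends at nu.\<close>
fun valid_walk :: "partition \<Rightarrow> (nat \<times> nat) list \<Rightarrow> partition \<Rightarrow> bool" where
  "valid_walk la [] nu \<longleftrightarrow> la = nu"
| "valid_walk la ((i, j) # t) nu \<longleftrightarrow>
     (i = 0 \<or> 0 < la i) \<and> is_partition (rem_box la i) \<and>
     is_partition (add_box (rem_box la i) j) \<and>
     valid_walk (add_box (rem_box la i) j) t nu"

definition Std :: "nat \<Rightarrow> partition \<Rightarrow> partition \<Rightarrow> (nat \<times> nat) list set" where
  "Std s la nu = {t. length t = s \<and> is_partition la \<and> valid_walk la t nu}"

definition StdPlus :: "nat \<Rightarrow> partition \<Rightarrow> partition \<Rightarrow> (nat \<times> nat) list set" where
  "StdPlus s la nu = {t \<in> Std s la nu. \<forall>i\<ge>1. length (filter (\<lambda>st. fst st = i) t) \<le> la i}"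

definition StdZero :: "nat \<Rightarrow> partition \<Rightarrow> partition \<Rightarrow> (nat \<times> nat) list set" where
  "StdZero s la nu = {t \<in> StdPlus s la nu. (0, 0) \<notin> set t}"

text \<open>t_{k<->k+1}: interchange the k-th and (k+1)-th integral steps (1-indexed)\<close>
definition swap_steps :: "nat \<Rightarrow> (nat \<times> nat) list \<Rightarrow> (nat \<times> nat) list" where
  "swap_steps k t = t[k - 1 := t ! k, k := t ! (k - 1)]"

definition co_Pieri :: "partition \<Rightarrow> partition \<Rightarrow> nat \<Rightarrow> bool" where
  "co_Pieri la nu s \<longleftrightarrow>
     is_partition la \<and> is_partition nu \<and> psize nu \<le> psize la + s \<and>
     StdZero s la nu \<noteq> {} \<and>
     (s = 1 \<or>
      (s > 1 \<and>
        (max (plength la) (plength nu) \<ge> 2 \<longrightarrow>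
          int s \<le> int (max (skew_size la (pinter la nu)) (skew_size nu (pinter la nu)))
                 + Min ((\<lambda>i. int (min (la (i - 1)) (nu (i - 1))) - int (max (la i) (nu i)))
                        ` {2..max (plength la) (plength nu)}))))"

definition phi :: "(nat \<times> nat) list \<Rightarrow> (nat \<times> nat) list \<Rightarrow> (nat \<times> nat) list" where
  "phi p q = map (\<lambda>(pp, qq). (fst qq - 1, snd pp - 1)) (zip p q)"

end

theory Submission
  imports Defs "HOL-Library.Multiset"
begin


definition cR :: "(nat \<times> nat) list \<Rightarrow> nat \<Rightarrow> nat" where
  "cR t r = length (filter (\<lambda>st. fst st = r) t)"
definition cA :: "(nat \<times> nat) list \<Rightarrow> nat \<Rightarrow> nat" where
  "cA t r = length (filter (\<lambda>st. snd st = r) t)"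

lemma cR_simps[simp]: "cR [] r = 0" "cR ((i,j)#t) r = (if i = r then Suc (cR t r) else cR t r)"
  by (auto simp: cR_def)
lemma cA_simps[simp]: "cA [] r = 0" "cA ((i,j)#t) r = (if j = r then Suc (cA t r) else cA t r)"
  by (auto simp: cA_def)

lemma rem_box_app: "rem_box mu i r = (if i \<noteq> 0 \<and> r = i then mu r - 1 else mu r)"
  by (auto simp: rem_box_def)
lemma add_box_app: "add_box mu j r = (if j \<noteq> 0 \<and> r = j then Suc (mu r) else mu r)"
  by (auto simp: add_box_def)

lemma walk_eq:
  "valid_walk mu t E \<Longrightarrow> (\<forall>r\<ge>1. mu r + cA t r = E r + cR t r) \<and> E 0 = mu 0"
proof (induction t arbitrary: mu)
  case Nil then show ?case by simp
next
  case (Cons st t)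
  obtain i j where st: "st = (i,j)" by (cases st)
  let ?y = "add_box (rem_box mu i) j"
  from Cons.prems st have v: "i = 0 \<or> 0 < mu i" "valid_walk ?y t E" by auto
  from Cons.IH[OF v(2)] have ih: "\<forall>r\<ge>1. ?y r + cA t r = E r + cR t r" "E 0 = ?y 0" by blast+
  show ?case
  proof (intro conjI allI impI)
    fix r :: nat assume r: "r \<ge> 1"
    have "?y r + cA t r = E r + cR t r" using ih r by auto
    then show "mu r + cA (st # t) r = E r + cR (st # t) r"
      using v(1) r unfolding st by (auto simp: rem_box_app add_box_app split: if_splits)
  next
    show "E 0 = mu 0" using ih(2) by (auto simp add: rem_box_app add_box_app)
  qed
qed

lemma walk_det: "valid_walk mu t E \<Longrightarrow> valid_walk mu t E' \<Longrightarrow> E = E'"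
proof (induction t arbitrary: mu)
  case Nil then show ?case by simp
next
  case (Cons st t) then show ?case by (cases st) auto
qed

lemma psize_eq_sum: "finite T \<Longrightarrow> {k. f k \<noteq> 0} \<subseteq> T \<Longrightarrow> psize f = sum f T"
  unfolding psize_def by (rule sum.mono_neutral_left) auto

lemma psize_upd:
  assumes "finite {k. mu k \<noteq> 0}"
  shows "psize (mu(i := v)) + mu i = psize mu + v"
proof -
  let ?T = "insert i {k. mu k \<noteq> 0}"
  have f: "finite ?T" using assms by simp
  have 1: "psize mu = sum mu ?T" by (rule psize_eq_sum[OF f]) auto
  have 2: "psize (mu(i := v)) = sum (mu(i := v)) ?T" by (rule psize_eq_sum[OF f]) auto
  have 3: "sum (mu(i := v)) ?T = (mu(i := v)) i + sum (mu(i := v)) (?T - {i})"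
    using f by (rule sum.remove) simp
  have 4: "sum mu ?T = mu i + sum mu (?T - {i})"
    using f by (rule sum.remove) simp
  have 5: "sum (mu(i := v)) (?T - {i}) = sum mu (?T - {i})"
    by (rule sum.cong) auto
  show ?thesis using 1 2 3 4 5 by simp
qed

lemma part_fin: "is_partition mu \<Longrightarrow> finite {k. mu k \<noteq> 0}"
  by (simp add: is_partition_def)

lemma psize_rem: "finite {k. mu k \<noteq> 0} \<Longrightarrow> i \<noteq> 0 \<Longrightarrow> 0 < mu i \<Longrightarrow> psize (rem_box mu i) + 1 = psize mu"
  using psize_upd[of mu i "mu i - 1"] by (simp add: rem_box_def)

lemma psize_add: "finite {k. mu k \<noteq> 0} \<Longrightarrow> j \<noteq> 0 \<Longrightarrow> psize (add_box mu j) = psize mu + 1"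
  using psize_upd[of mu j "Suc (mu j)"] by (simp add: add_box_def)

definition nz1 :: "(nat \<times> nat) list \<Rightarrow> nat" where "nz1 t = length (filter (\<lambda>st. fst st \<noteq> 0) t)"
definition nz2 :: "(nat \<times> nat) list \<Rightarrow> nat" where "nz2 t = length (filter (\<lambda>st. snd st \<noteq> 0) t)"

lemma walk_size:
  "is_partition mu \<Longrightarrow> valid_walk mu t E \<Longrightarrow> psize E + nz1 t = psize mu + nz2 t"
proof (induction t arbitrary: mu)
  case Nil then show ?case by (simp add: nz1_def nz2_def)
next
  case (Cons st t)
  obtain i j where st: "st = (i,j)" by (cases st)
  let ?x = "rem_box mu i"
  let ?y = "add_box ?x j"
  from Cons.prems st have v: "i = 0 \<or> 0 < mu i" "is_partition ?x" "is_partition ?y" "valid_walk ?y t E" by auto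
  have ih: "psize E + nz1 t = psize ?y + nz2 t" using Cons.IH[OF v(3) v(4)] .
  have a: "psize ?x + (if i = 0 then 0 else 1) = psize mu"
    using psize_rem[OF part_fin[OF Cons.prems(1)], of i] v(1) by (auto simp: rem_box_def)
  have b: "psize ?y = psize ?x + (if j = 0 then 0 else 1)"
    using psize_add[OF part_fin[OF v(2)], of j] by (auto simp: add_box_def)
  show ?case using ih a b unfolding st by (auto simp: nz1_def nz2_def)
qed

lemma nz_le: "nz1 t \<le> length t" "nz2 t \<le> length t"
  by (auto simp: nz1_def nz2_def)

lemma nz1_all: "nz1 t = length t \<Longrightarrow> \<forall>x\<in>set t. fst x \<noteq> 0"
  unfolding nz1_def by (metis (mono_tags, lifting) filter_True length_filter_less less_irrefl_nat)
lemma nz2_all: "nz2 t = length t \<Longrightarrow> \<forall>x\<in>set t. snd x \<noteq> 0"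
  unfolding nz2_def by (metis (mono_tags, lifting) filter_True length_filter_less less_irrefl_nat)
lemma nz1_none: "nz1 t = 0 \<Longrightarrow> \<forall>x\<in>set t. fst x = 0"
  unfolding nz1_def by (simp add: filter_empty_conv)
lemma nz2_none: "nz2 t = 0 \<Longrightarrow> \<forall>x\<in>set t. snd x = 0"
  unfolding nz2_def by (simp add: filter_empty_conv)



lemma walk_box:
  assumes box: "\<And>x. x 0 = 0 \<Longrightarrow> (\<forall>r\<ge>1. lo r \<le> x r \<and> x r \<le> hi r) \<Longrightarrow> is_partition x"
  shows "mu 0 = 0 \<Longrightarrow> E 0 = 0 \<Longrightarrow>
    (\<forall>r\<ge>1. lo r + cR t r \<le> mu r \<and> mu r + cA t r \<le> hi r \<and> mu r + cA t r = E r + cR t r)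
    \<Longrightarrow> valid_walk mu t E"
proof (induction t arbitrary: mu)
  case Nil
  show ?case
  proof (simp, rule ext)
    fix r show "mu r = E r" using Nil by (cases "r = 0") auto
  qed
next
  case (Cons st t)
  obtain i j where st: "st = (i,j)" by (cases st)
  let ?x = "rem_box mu i"
  let ?y = "add_box ?x j"
  have H: "\<And>r. r \<ge> 1 \<Longrightarrow> lo r + cR ((i,j)#t) r \<le> mu r \<and> mu r + cA ((i,j)#t) r \<le> hi r \<and> mu r + cA ((i,j)#t) r = E r + cR ((i,j)#t) r"
    using Cons.prems(3) st by auto
  have c1: "i = 0 \<or> 0 < mu i"
  proof (cases "i = 0")
    case False then show ?thesis using H[of i] by auto
  qed simp
  have x: "\<And>r. r \<ge> 1 \<Longrightarrow> lo r + cR t r \<le> ?x r \<and> ?x r + cA ((i,j)#t) r \<le> hi r"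
  proof -
    fix r :: nat assume r: "r \<ge> 1"
    show "lo r + cR t r \<le> ?x r \<and> ?x r + cA ((i,j)#t) r \<le> hi r"
      using H[OF r] by (auto simp: rem_box_app split: if_splits)
  qed
  have x0: "?x 0 = 0" using Cons.prems(1) by (simp add: rem_box_app)
  have px: "is_partition ?x"
    using box[of ?x] x0 x by fastforce
  have y: "\<And>r. r \<ge> 1 \<Longrightarrow> lo r + cR t r \<le> ?y r \<and> ?y r + cA t r \<le> hi r \<and> ?y r + cA t r = E r + cR t r"
  proof -
    fix r :: nat assume r: "r \<ge> 1"
    have xr: "?x r = (if i = r then mu r - 1 else mu r)" using r by (auto simp: rem_box_app)
    have yr: "?y r = (if j = r then Suc (?x r) else ?x r)" using r by (auto simp: add_box_app)
    have hr: "lo r + cR ((i,j)#t) r \<le> mu r" "mu r + cA ((i,j)#t) r \<le> hi r"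
       "mu r + cA ((i,j)#t) r = E r + cR ((i,j)#t) r" using H[OF r] by auto
    show "lo r + cR t r \<le> ?y r \<and> ?y r + cA t r \<le> hi r \<and> ?y r + cA t r = E r + cR t r"
      using xr yr hr by (cases "i = r"; cases "j = r") auto
  qed
  have y0: "?y 0 = 0" using x0 by (auto simp add: add_box_app)
  have py: "is_partition ?y"
    using box[of ?y] y0 y by fastforce
  have "valid_walk ?y t E" using Cons.IH[of ?y] y0 Cons.prems(2) y by blast
  then show ?case using c1 px py st by simp
qed

lemma box_part:
  assumes "\<forall>r\<ge>1. hi (Suc r) \<le> lo r" "finite {r. hi r \<noteq> 0}" "x 0 = 0"
    "\<forall>r\<ge>1. lo r \<le> x r \<and> x r \<le> hi r"
  shows "is_partition x"
  unfolding is_partition_def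
proof (intro conjI allI impI)
  show "x 0 = 0" by fact
  fix i :: nat assume i: "1 \<le> i"
  have "x (Suc i) \<le> hi (Suc i)" using assms(4) by auto
  also have "\<dots> \<le> lo i" using assms(1) i by auto
  also have "\<dots> \<le> x i" using assms(4) i by auto
  finally show "x (Suc i) \<le> x i" .
next
  have "{r. x r \<noteq> 0} \<subseteq> {r. hi r \<noteq> 0}"
  proof
    fix r assume "r \<in> {r. x r \<noteq> 0}"
    then have "x r \<noteq> 0" by simp
    then have "r \<ge> 1" using assms(3) by (cases r) auto
    then show "r \<in> {r. hi r \<noteq> 0}" using assms(4) \<open>x r \<noteq> 0\<close> by force
  qed
  then show "finite {r. x r \<noteq> 0}" using assms(2) finite_subset by blast
qed

definition unsh :: "partition \<Rightarrow> partition" where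
  "unsh f = (\<lambda>i. if i = 0 then 0 else f (Suc i))"

lemma unsh_rem: "unsh (rem_box mu (Suc i)) = rem_box (unsh mu) i"
  by (rule ext) (auto simp: unsh_def rem_box_app)
lemma unsh_add: "unsh (add_box mu (Suc i)) = add_box (unsh mu) i"
  by (rule ext) (auto simp: unsh_def add_box_app)

lemma part_mono: assumes "is_partition mu" "1 \<le> j" shows "j \<le> m \<Longrightarrow> mu m \<le> mu j"
proof (induction m rule: dec_induct)
  case base then show ?case by simp
next
  case (step k)
  then have "mu (Suc k) \<le> mu k" using assms unfolding is_partition_def by auto
  then show ?case using step by simp
qed

lemma unsh_part: "is_partition mu \<Longrightarrow> is_partition (unsh mu)"
  unfolding is_partition_def
proof (intro conjI allI impI)
  assume p: "mu 0 = 0 \<and> (\<forall>i\<ge>1. mu (Suc i) \<le> mu i) \<and> finite {i. mu i \<noteq> 0}"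
  show "unsh mu 0 = 0" by (simp add: unsh_def)
  fix i :: nat assume "1 \<le> i"
  then show "unsh mu (Suc i) \<le> unsh mu i" using p by (auto simp: unsh_def)
next
  assume p: "mu 0 = 0 \<and> (\<forall>i\<ge>1. mu (Suc i) \<le> mu i) \<and> finite {i. mu i \<noteq> 0}"
  have "{i. unsh mu i \<noteq> 0} \<subseteq> (\<lambda>k. k - 1) ` {i. mu i \<noteq> 0}"
  proof
    fix i assume "i \<in> {i. unsh mu i \<noteq> 0}"
    then have "mu (Suc i) \<noteq> 0" by (auto simp: unsh_def split: if_splits)
    then show "i \<in> (\<lambda>k. k - 1) ` {i. mu i \<noteq> 0}" by (intro image_eqI[of _ _ "Suc i"]) auto
  qed
  then show "finite {i. unsh mu i \<noteq> 0}" using p finite_subset by blast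
qed

lemma part_unsh:
  assumes "mu 0 = 0" "mu 2 \<le> mu 1" "is_partition (unsh mu)"
  shows "is_partition mu"
  unfolding is_partition_def
proof (intro conjI allI impI)
  show "mu 0 = 0" by fact
  fix i :: nat assume i: "1 \<le> i"
  show "mu (Suc i) \<le> mu i"
  proof (cases "i = 1")
    case True then show ?thesis using assms(2) by (simp add: numeral_2_eq_2)
  next
    case False
    then have i1: "i - 1 \<ge> 1" using i by auto
    then have "unsh mu (Suc (i - 1)) \<le> unsh mu (i - 1)" using assms(3) unfolding is_partition_def
      by blast
    then show ?thesis using False i by (simp add: unsh_def)
  qed
next
  have fin: "finite {i. unsh mu i \<noteq> 0}" using assms(3) by (simp add: is_partition_def)
  have "{i. mu i \<noteq> 0} \<subseteq> insert 1 (Suc ` {i. unsh mu i \<noteq> 0})"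
  proof
    fix i assume a: "i \<in> {i. mu i \<noteq> 0}"
    then have "i \<noteq> 0" using assms(1) by (cases i) auto
    show "i \<in> insert 1 (Suc ` {i. unsh mu i \<noteq> 0})"
    proof (cases "i = 1")
      case False
      then have "i = Suc (i - 1)" "i - 1 \<noteq> 0" using \<open>i \<noteq> 0\<close> by auto
      then show ?thesis using a by (auto simp: unsh_def intro!: image_eqI[of _ _ "i - 1"])
    qed simp
  qed
  then show "finite {i. mu i \<noteq> 0}" using fin finite_subset by blast
qed

lemma psize_unsh:
  assumes "f 0 = 0" "finite {k. f k \<noteq> 0}"
  shows "psize f = f 1 + psize (unsh f)"
proof -
  let ?U = "{k. unsh f k \<noteq> 0}"
  have sub: "?U \<subseteq> (\<lambda>k. k - 1) ` {k. f k \<noteq> 0}"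
  proof
    fix i assume "i \<in> ?U"
    then have "f (Suc i) \<noteq> 0" by (auto simp: unsh_def split: if_splits)
    then show "i \<in> (\<lambda>k. k - 1) ` {i. f i \<noteq> 0}" by (intro image_eqI[of _ _ "Suc i"]) auto
  qed
  have finU: "finite ?U" using sub assms(2) finite_subset by blast
  have U0: "0 \<notin> ?U" by (simp add: unsh_def)
  have "psize (unsh f) = sum (unsh f) ?U" by (simp add: psize_def)
  also have "\<dots> = sum (\<lambda>k. f (Suc k)) ?U" by (rule sum.cong) (auto simp: unsh_def)
  also have "\<dots> = sum f (Suc ` ?U)" by (simp add: sum.reindex)
  finally have 1: "psize (unsh f) = sum f (Suc ` ?U)" .
  have "{k. f k \<noteq> 0} \<subseteq> insert 1 (Suc ` ?U)"
  proof
    fix i assume a: "i \<in> {i. f i \<noteq> 0}"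
    then have "i \<noteq> 0" using assms(1) by (cases i) auto
    show "i \<in> insert 1 (Suc ` ?U)"
    proof (cases "i = 1")
      case False
      then have "i = Suc (i - 1)" "i - 1 \<noteq> 0" using \<open>i \<noteq> 0\<close> by auto
      then show ?thesis using a by (auto simp: unsh_def intro!: image_eqI[of _ _ "i - 1"])
    qed simp
  qed
  then have "psize f = sum f (insert 1 (Suc ` ?U))" by (intro psize_eq_sum) (use finU in auto)
  also have "\<dots> = f 1 + sum f (Suc ` ?U)" using finU U0 by (subst sum.insert) auto
  finally show ?thesis using 1 by simp
qed

lemma unsh_shift: "mu 0 = 0 \<Longrightarrow> unsh (shift_part n mu) = mu"
  by (rule ext) (auto simp: unsh_def shift_part_def)

lemma shift_part_ok:
  assumes "is_partition mu" "mu 1 + psize mu \<le> n"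
  shows "is_partition (shift_part n mu)" "psize (shift_part n mu) = n"
proof -
  have m0: "mu 0 = 0" using assms(1) by (simp add: is_partition_def)
  show p: "is_partition (shift_part n mu)"
    by (rule part_unsh) (use assms m0 unsh_shift[of mu n, OF m0] in \<open>auto simp: shift_part_def\<close>)
  have "psize (shift_part n mu) = shift_part n mu 1 + psize (unsh (shift_part n mu))"
    by (rule psize_unsh) (use p in \<open>auto simp: is_partition_def\<close>)
  then show "psize (shift_part n mu) = n" using assms unsh_shift[of mu n, OF m0] by (simp add: shift_part_def)
qed

lemma plength_ge:
  assumes "is_partition mu" "1 \<le> k" "mu k \<noteq> 0"
  shows "k \<le> plength mu"
proof -
  have "{1..k} \<subseteq> {i. 1 \<le> i \<and> mu i \<noteq> 0}"
  proof
    fix i assume "i \<in> {1..k}"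
    then have "1 \<le> i" "i \<le> k" by auto
    then have "mu k \<le> mu i" using part_mono[OF assms(1)] by blast
    then show "i \<in> {i. 1 \<le> i \<and> mu i \<noteq> 0}" using assms(3) \<open>1 \<le> i\<close> by auto
  qed
  moreover have "finite {i. 1 \<le> i \<and> mu i \<noteq> 0}" using assms(1) unfolding is_partition_def by auto
  ultimately have "card {1..k} \<le> plength mu" unfolding plength_def by (rule card_mono[rotated])
  then show ?thesis by simp
qed



lemma psize_diff:
  assumes "\<forall>r. f r \<le> g r" "finite T" "{r. g r \<noteq> 0} \<subseteq> T"
  shows "int (psize g) - int (psize f) = (\<Sum>r\<in>T. int (g r) - int (f r))"
proof -
  have "{r. f r \<noteq> 0} \<subseteq> T"
  proof
    fix r assume "r \<in> {r. f r \<noteq> 0}"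
    then have "f r \<noteq> 0" by simp
    moreover have "f r \<le> g r" using assms(1) by blast
    ultimately have "g r \<noteq> 0" by linarith
    then show "r \<in> T" using assms(3) by blast
  qed
  then have "psize f = sum f T" by (rule psize_eq_sum[OF assms(2)])
  moreover have "psize g = sum g T" by (rule psize_eq_sum[OF assms(2,3)])
  ultimately show ?thesis by (simp add: sum_subtractf)
qed

lemma psize_mono:
  assumes "\<forall>r. f r \<le> g r" "finite {r. g r \<noteq> 0}"
  shows "psize f \<le> psize g"
proof -
  have "int (psize g) - int (psize f) = (\<Sum>r\<in>{r. g r \<noteq> 0}. int (g r) - int (f r))"
    by (rule psize_diff[OF assms(1,2)]) simp
  also have "\<dots> \<ge> 0" using assms(1) by (intro sum_nonneg) auto
  finally show ?thesis by simp
qed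

lemma two_terms:
  assumes "\<forall>r. f r \<le> g r" "finite {r. g r \<noteq> 0}" "i \<noteq> i'"
  shows "(int (g i) - int (f i)) + (int (g i') - int (f i')) \<le> int (psize g) - int (psize f)"
proof -
  let ?T = "{r. g r \<noteq> 0} \<union> {i, i'}"
  have fT: "finite ?T" using assms(2) by simp
  have "int (psize g) - int (psize f) = (\<Sum>r\<in>?T. int (g r) - int (f r))"
    by (rule psize_diff[OF assms(1) fT]) auto
  also have "(\<Sum>r\<in>{i, i'}. int (g r) - int (f r)) \<le> \<dots>"
    by (rule sum_mono2[OF fT]) (use assms(1) in auto)
  finally show ?thesis using assms(3) by simp
qed

lemma good_beta:
  assumes cp: "co_Pieri la nu s" and s1: "s \<noteq> 1"
    and bl: "\<forall>r. be r \<le> la r" and bn: "\<forall>r. be r \<le> nu r"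
    and sl: "psize la \<le> psize be + s" and sn: "psize nu \<le> psize be + s"
    and i: "1 \<le> i"
  shows "la (Suc i) + nu (Suc i) \<le> be i + be (Suc i)"
proof -
  have pl: "is_partition la" and pn: "is_partition nu" using cp unfolding co_Pieri_def by (simp_all only:)
  let ?L = "max (plength la) (plength nu)"
  show ?thesis
  proof (cases "Suc i \<le> ?L")
    case False
    have "la (Suc i) = 0" using plength_ge[OF pl, of "Suc i"] False by fastforce
    moreover have "nu (Suc i) = 0" using plength_ge[OF pn, of "Suc i"] False by fastforce
    ultimately show ?thesis by simp
  next
    case True
    then have L2: "?L \<ge> 2" using i by simp
    let ?m = "pinter la nu"
    let ?a = "skew_size la ?m" and ?b = "skew_size nu ?m"
    let ?f = "\<lambda>i. int (min (la (i - 1)) (nu (i - 1))) - int (max (la i) (nu i))"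
    have cps: "s = 1 \<or> (s > 1 \<and> (?L \<ge> 2 \<longrightarrow> int s \<le> int (max ?a ?b) + Min (?f ` {2..?L})))"
      using cp unfolding co_Pieri_def by blast
    have ineq: "int s \<le> int (max ?a ?b) + Min (?f ` {2..?L})"
      using cps s1 L2 by blast
    have "Min (?f ` {2..?L}) \<le> ?f (Suc i)"
      by (rule Min_le, simp, rule image_eqI[of _ _ "Suc i"]) (use True i in auto)
    then have ineq2: "int s \<le> int (max ?a ?b) + ?f (Suc i)" using ineq by simp
    have finl: "finite {r. la r \<noteq> 0}" using pl by (simp add: is_partition_def)
    have finn: "finite {r. nu r \<noteq> 0}" using pn by (simp add: is_partition_def)
    have fm: "finite {r. ?m r \<noteq> 0}"
      by (rule finite_subset[OF _ finl]) (auto simp: pinter_def)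
    have bm: "\<forall>r. be r \<le> ?m r" using bl bn by (simp add: pinter_def)
    have ml: "\<forall>r. ?m r \<le> la r" and mn: "\<forall>r. ?m r \<le> nu r" by (auto simp: pinter_def)
    have "psize ?m \<le> psize la" by (rule psize_mono[OF ml finl])
    then have a: "int ?a = int (psize la) - int (psize ?m)" by (simp add: skew_size_def)
    have "psize ?m \<le> psize nu" by (rule psize_mono[OF mn finn])
    then have b: "int ?b = int (psize nu) - int (psize ?m)" by (simp add: skew_size_def)
    have tt: "(int (?m i) - int (be i)) + (int (?m (Suc i)) - int (be (Suc i))) \<le> int (psize ?m) - int (psize be)"
      by (rule two_terms[OF bm fm]) simp
    have "int (max ?a ?b) = max (int ?a) (int ?b)" by simp
    then have "int (max ?a ?b) + (int (psize ?m) - int (psize be)) \<le> int s"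
      using a b sl sn by linarith
    then have "(int (?m i) - int (be i)) + (int (?m (Suc i)) - int (be (Suc i))) \<le> ?f (Suc i)"
      using ineq2 tt by linarith
    then have e: "(int (min (la i) (nu i)) - int (be i)) + (int (min (la (Suc i)) (nu (Suc i))) - int (be (Suc i)))
        \<le> int (min (la i) (nu i)) - int (max (la (Suc i)) (nu (Suc i)))"
      by (simp only: pinter_def diff_Suc_1)
    have mm: "min (la (Suc i)) (nu (Suc i)) + max (la (Suc i)) (nu (Suc i)) = la (Suc i) + nu (Suc i)"
      by (simp add: min_def max_def)
    have "int (min (la (Suc i)) (nu (Suc i))) + int (max (la (Suc i)) (nu (Suc i))) \<le> int (be i) + int (be (Suc i))"
      using e by linarith
    then have "int (la (Suc i)) + int (nu (Suc i)) \<le> int (be i) + int (be (Suc i))"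
      using mm by linarith
    then show ?thesis by linarith
  qed
qed



lemma cR_cons: "cR (x#t) r = (if fst x = r then Suc (cR t r) else cR t r)"
  by (cases x) simp
lemma cA_cons: "cA (x#t) r = (if snd x = r then Suc (cA t r) else cA t r)"
  by (cases x) simp

lemma sum_cR: "finite S \<Longrightarrow> (\<Sum>r\<in>S. cR t r) \<le> length t"
proof (induction t)
  case Nil then show ?case by simp
next
  case (Cons x t)
  have "(\<Sum>r\<in>S. cR (x#t) r) = (\<Sum>r\<in>S. cR t r + (if fst x = r then 1 else 0))"
    by (rule sum.cong) (auto simp: cR_cons)
  also have "\<dots> = (\<Sum>r\<in>S. cR t r) + (\<Sum>r\<in>S. (if fst x = r then 1 else 0))"
    by (rule sum.distrib)
  also have "(\<Sum>r\<in>S. (if fst x = r then 1 else 0)) \<le> (1::nat)"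
    using Cons.prems by (simp add: sum.delta')
  finally show ?case using Cons by simp
qed

lemma sum_cA: "finite S \<Longrightarrow> (\<Sum>r\<in>S. cA t r) \<le> length t"
proof (induction t)
  case Nil then show ?case by simp
next
  case (Cons x t)
  have "(\<Sum>r\<in>S. cA (x#t) r) = (\<Sum>r\<in>S. cA t r + (if snd x = r then 1 else 0))"
    by (rule sum.cong) (auto simp: cA_cons)
  also have "\<dots> = (\<Sum>r\<in>S. cA t r) + (\<Sum>r\<in>S. (if snd x = r then 1 else 0))"
    by (rule sum.distrib)
  also have "(\<Sum>r\<in>S. (if snd x = r then 1 else 0)) \<le> (1::nat)"
    using Cons.prems by (simp add: sum.delta')
  finally show ?case using Cons by simp
qed

definition wmap :: "(nat \<times> nat) list \<Rightarrow> (nat \<times> nat) list \<Rightarrow> (nat \<times> nat) list" where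
  "wmap p q = map (\<lambda>(pp, qq). (fst qq, snd pp)) (zip p q)"

lemma cR_wmap: "length p = length q \<Longrightarrow> cR (wmap p q) r = cR q r"
  unfolding wmap_def by (induction p q rule: list_induct2) (auto simp: cR_cons)
lemma cA_wmap: "length p = length q \<Longrightarrow> cA (wmap p q) r = cA p r"
  unfolding wmap_def by (induction p q rule: list_induct2) (auto simp: cA_cons)
lemma set_wmap: "x \<in> set (wmap p q) \<Longrightarrow> \<exists>a b. a \<in> set p \<and> b \<in> set q \<and> x = (fst b, snd a)"
  unfolding wmap_def by (force dest: set_zip_leftD set_zip_rightD)

definition dec :: "nat \<times> nat \<Rightarrow> nat \<times> nat" where "dec = (\<lambda>(i, j). (i - 1, j - 1))"

lemma phi_wmap: "phi p q = map dec (wmap p q)"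
  unfolding phi_def wmap_def dec_def by (simp add: case_prod_beta)

lemma cR_dec: "\<forall>x\<in>set w. fst x \<noteq> 0 \<Longrightarrow> cR (map dec w) i = cR w (Suc i)"
  by (induction w) (auto simp: cR_cons dec_def case_prod_beta)

lemma cR_zero: "\<forall>x\<in>set t. fst x = 0 \<Longrightarrow> r \<noteq> 0 \<Longrightarrow> cR t r = 0"
  by (induction t) (auto simp: cR_cons)
lemma cA_zero: "\<forall>x\<in>set t. snd x = 0 \<Longrightarrow> r \<noteq> 0 \<Longrightarrow> cA t r = 0"
  by (induction t) (auto simp: cA_cons)

definition pmk :: "(nat \<times> nat) list \<Rightarrow> (nat \<times> nat) list" where "pmk u = map (\<lambda>(i, j). (0, Suc j)) u"
definition qmk :: "(nat \<times> nat) list \<Rightarrow> (nat \<times> nat) list" where "qmk u = map (\<lambda>(i, j). (Suc i, 0)) u"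

lemma qmk_cR: "cR (qmk u) (Suc r) = cR u r" "cR (qmk u) 0 = 0"
  by (induction u) (auto simp: qmk_def cR_cons case_prod_beta)
lemma qmk_cA: "r \<noteq> 0 \<Longrightarrow> cA (qmk u) r = 0"
  by (induction u) (auto simp: qmk_def cA_cons case_prod_beta)
lemma pmk_cA: "cA (pmk u) (Suc r) = cA u r" "cA (pmk u) 0 = 0"
  by (induction u) (auto simp: pmk_def cA_cons case_prod_beta)
lemma pmk_cR: "r \<noteq> 0 \<Longrightarrow> cR (pmk u) r = 0"
  by (induction u) (auto simp: pmk_def cR_cons case_prod_beta)
lemma phi_mk: "phi (pmk u) (qmk u) = u"
  unfolding phi_def pmk_def qmk_def by (induction u) auto

lemma walk_unsh:
  "valid_walk mu w E \<Longrightarrow> \<forall>x\<in>set w. fst x \<noteq> 0 \<and> snd x \<noteq> 0 \<Longrightarrow>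
   valid_walk (unsh mu) (map dec w) (unsh E)"
proof (induction w arbitrary: mu)
  case Nil then show ?case by simp
next
  case (Cons x w)
  obtain i j where x: "x = (i, j)" by (cases x)
  have ij: "i = Suc (i - 1)" "j = Suc (j - 1)" using Cons.prems(2) x by auto
  let ?y = "add_box (rem_box mu i) j"
  have v: "0 < mu i" "is_partition (rem_box mu i)" "is_partition ?y" "valid_walk ?y w E"
    using Cons.prems x ij by auto
  have e1: "unsh (rem_box mu i) = rem_box (unsh mu) (i - 1)" using unsh_rem[of mu "i - 1"] ij by simp
  have e2: "unsh ?y = add_box (rem_box (unsh mu) (i - 1)) (j - 1)"
    using unsh_add[of "rem_box mu i" "j - 1"] ij e1 by simp
  have "valid_walk (unsh ?y) (map dec w) (unsh E)" using Cons.IH[OF v(4)] Cons.prems(2) by simp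
  moreover have "i - 1 = 0 \<or> 0 < unsh mu (i - 1)" using v(1) ij by (auto simp: unsh_def)
  moreover have "is_partition (rem_box (unsh mu) (i - 1))" using unsh_part[OF v(2)] e1 by simp
  moreover have "is_partition (add_box (rem_box (unsh mu) (i - 1)) (j - 1))" using unsh_part[OF v(3)] e2 by simp
  ultimately show ?case using e2 x by (simp add: dec_def)
qed

lemma cnt_swap:
  assumes "1 \<le> k" "k < length t"
  shows "cR (swap_steps k t) r = cR t r" "cA (swap_steps k t) r = cA t r" "length (swap_steps k t) = length t"
proof -
  have m: "mset (swap_steps k t) = mset t" unfolding swap_steps_def
    by (rule mset_swap) (use assms in auto)
  have "\<And>P. length (filter P (swap_steps k t)) = length (filter P t)"
    by (metis m mset_filter size_mset)
  then show "cR (swap_steps k t) r = cR t r" "cA (swap_steps k t) r = cA t r"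
    unfolding cR_def cA_def by blast+
  show "length (swap_steps k t) = length t" by (simp add: swap_steps_def)
qed

lemma set_swap:
  assumes "1 \<le> k" "k < length t"
  shows "set (swap_steps k t) = set t"
proof -
  have m: "mset (swap_steps k t) = mset t" unfolding swap_steps_def
    by (rule mset_swap) (use assms in auto)
  then show ?thesis by (metis set_mset_mset)
qed

lemma phi_swap:
  assumes "length p = length q" "1 \<le> k" "k < length p"
  shows "phi (swap_steps k p) (swap_steps k q) = swap_steps k (phi p q)"
  unfolding phi_def swap_steps_def
  by (rule nth_equalityI) (use assms in \<open>auto simp: nth_list_update\<close>)



lemma rem0[simp]: "rem_box x 0 = x" by (simp add: rem_box_def)
lemma add0[simp]: "add_box x 0 = x" by (simp add: add_box_def)

lemma nz1_cR: "nz1 t + cR t 0 = length t"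
  unfolding nz1_def cR_def by (induction t) auto
lemma nz2_cA: "nz2 t + cA t 0 = length t"
  unfolding nz2_def cA_def by (induction t) auto
lemma cR_le: "cR t r \<le> length t" unfolding cR_def by simp
lemma cA_le: "cA t r \<le> length t" unfolding cA_def by simp

context
  fixes la nu :: partition and s n :: nat
  assumes cp: "co_Pieri la nu s"
    and nbig: "psize la + psize nu + s + la 1 + nu 1 \<le> n"
begin

abbreviation "LL \<equiv> shift_part n la"
abbreviation "VV \<equiv> shift_part n nu"

lemma pl: "is_partition la" and pn: "is_partition nu" and s1: "s \<ge> 1"
  using cp unfolding co_Pieri_def by auto

lemma la0: "la 0 = 0" and nu0: "nu 0 = 0"
  using pl pn by (auto simp: is_partition_def)

lemma finl: "finite {r. la r \<noteq> 0}" and finn: "finite {r. nu r \<noteq> 0}"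
  using pl pn by (auto simp: is_partition_def)

lemma pLL: "is_partition LL" "psize LL = n"
  using shift_part_ok[OF pl] nbig by auto
lemma pVV: "is_partition VV" "psize VV = n"
  using shift_part_ok[OF pn] nbig by auto

lemma LLv: "LL 0 = 0" "LL (Suc 0) = n - psize la" "r \<ge> 1 \<Longrightarrow> LL (Suc r) = la r"
  by (auto simp: shift_part_def)
lemma VVv: "VV 0 = 0" "VV (Suc 0) = n - psize nu" "r \<ge> 1 \<Longrightarrow> VV (Suc r) = nu r"
  by (auto simp: shift_part_def)

lemma finLL: "finite {r. LL r \<noteq> 0}" and finVV: "finite {r. VV r \<noteq> 0}"
  using pLL(1) pVV(1) by (auto simp: is_partition_def)

lemma good_sh:
  assumes "s \<noteq> 1" "al 0 = 0" "\<forall>r. al r \<le> LL r" "\<forall>r. al r \<le> VV r"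
    "psize la \<le> psize (unsh al) + s" "psize nu \<le> psize (unsh al) + s" "la 1 + nu 1 \<le> al 1"
  shows "\<forall>r\<ge>1. LL (Suc r) + VV (Suc r) - al (Suc r) \<le> al r"
proof (intro allI impI)
  fix r :: nat assume r: "r \<ge> 1"
  show "LL (Suc r) + VV (Suc r) - al (Suc r) \<le> al r"
  proof (cases "r = 1")
    case True
    then show ?thesis using assms(7) LLv(3)[of 1] VVv(3)[of 1] by simp
  next
    case False
    then obtain i where i: "r = Suc i" "i \<ge> 1" using r by (cases r) auto
    have bl: "\<forall>r. unsh al r \<le> la r"
    proof
      fix r show "unsh al r \<le> la r"
        using assms(3) LLv(3)[of r] by (cases "r = 0") (auto simp: unsh_def, metis)
    qed
    have bn: "\<forall>r. unsh al r \<le> nu r"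
    proof
      fix r show "unsh al r \<le> nu r"
        using assms(4) VVv(3)[of r] by (cases "r = 0") (auto simp: unsh_def, metis)
    qed
    have "la (Suc i) + nu (Suc i) \<le> unsh al i + unsh al (Suc i)"
      by (rule good_beta[OF cp assms(1) bl bn assms(5,6) i(2)])
    then show ?thesis using i LLv(3)[of "Suc i"] VVv(3)[of "Suc i"] by (simp add: unsh_def)
  qed
qed

lemma box_ok:
  assumes g: "\<forall>r\<ge>1. LL (Suc r) + VV (Suc r) - al (Suc r) \<le> al r"
  shows "\<And>x. x 0 = 0 \<Longrightarrow> (\<forall>r\<ge>1. al r \<le> x r \<and> x r \<le> LL r + VV r - al r) \<Longrightarrow> is_partition x"
proof -
  fix x :: partition assume x: "x 0 = 0" "\<forall>r\<ge>1. al r \<le> x r \<and> x r \<le> LL r + VV r - al r"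
  have "finite {r. LL r + VV r - al r \<noteq> 0}"
    by (rule finite_subset[OF _ finite_UnI[OF finLL finVV]]) auto
  then show "is_partition x" by (rule box_part[OF g _ x(1) x(2)])
qed

definition inA :: "partition \<Rightarrow> bool" where
  "inA al \<longleftrightarrow> is_partition al \<and> psize al = n - s \<and> psubseteq al (pinter LL VV)"

lemma A_facts:
  assumes "inA al"
  shows "al 0 = 0" "\<forall>r. al r \<le> LL r" "\<forall>r. al r \<le> VV r"
    "psize la \<le> psize (unsh al) + s" "psize nu \<le> psize (unsh al) + s" "la 1 + nu 1 \<le> al 1"
proof -
  have pa: "is_partition al" and sa: "psize al = n - s" and sub: "\<forall>r. al r \<le> LL r \<and> al r \<le> VV r"
    using assms by (auto simp: inA_def psubseteq_def pinter_def)
  show a0: "al 0 = 0" using pa by (simp add: is_partition_def)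
  show "\<forall>r. al r \<le> LL r" "\<forall>r. al r \<le> VV r" using sub by auto
  have fa: "finite {r. al r \<noteq> 0}" using pa by (simp add: is_partition_def)
  have e: "psize al = al 1 + psize (unsh al)" by (rule psize_unsh[OF a0 fa])
  have a1: "al 1 \<le> n - psize la" "al 1 \<le> n - psize nu" using sub LLv(2) VVv(2) by (metis One_nat_def)+
  have bl: "\<forall>r. unsh al r \<le> la r"
  proof
    fix r show "unsh al r \<le> la r"
      using sub LLv(3)[of r] by (cases "r = 0") (auto simp: unsh_def, metis)
  qed
  have "psize (unsh al) \<le> psize la" by (rule psize_mono[OF bl finl])
  show "psize la \<le> psize (unsh al) + s" using e sa a1 nbig by linarith
  show "psize nu \<le> psize (unsh al) + s" using e sa a1 nbig by linarith
  show "la 1 + nu 1 \<le> al 1" using e sa \<open>psize (unsh al) \<le> psize la\<close> nbig by linarith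
qed

lemma formP:
  assumes "inA al" "p \<in> Std s al VV"
  shows "\<forall>x\<in>set p. fst x = 0 \<and> snd x \<noteq> 0"
proof -
  have pa: "is_partition al" "psize al = n - s" using assms(1) by (auto simp: inA_def)
  have v: "length p = s" "valid_walk al p VV" using assms(2) by (auto simp: Std_def)
  have "psize VV + nz1 p = psize al + nz2 p" by (rule walk_size[OF pa(1) v(2)])
  then have "nz1 p = 0 \<and> nz2 p = length p" using pVV(2) pa(2) nz_le[of p] v(1) nbig by linarith
  then show ?thesis using nz1_none nz2_all by blast
qed

lemma formQ:
  assumes "inA al" "q \<in> Std s LL al"
  shows "\<forall>x\<in>set q. fst x \<noteq> 0 \<and> snd x = 0"
proof -
  have pa: "is_partition al" "psize al = n - s" using assms(1) by (auto simp: inA_def)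
  have v: "length q = s" "valid_walk LL q al" using assms(2) by (auto simp: Std_def)
  have "psize al + nz1 q = psize LL + nz2 q" by (rule walk_size[OF pLL(1) v(2)])
  then have "nz1 q = length q \<and> nz2 q = 0" using pLL(2) pa(2) nz_le[of q] v(1) nbig by linarith
  then show ?thesis using nz1_all nz2_none by blast
qed

lemma pq_eqs:
  assumes "inA al" "p \<in> Std s al VV" "q \<in> Std s LL al"
  shows "\<forall>r\<ge>1. LL r = al r + cR q r \<and> VV r = al r + cA p r \<and> cR p r = 0 \<and> cA q r = 0"
proof -
  have vp: "valid_walk al p VV" and vq: "valid_walk LL q al" using assms by (auto simp: Std_def)
  have fp: "\<forall>x\<in>set p. fst x = 0" using formP[OF assms(1,2)] by blast
  have fq: "\<forall>x\<in>set q. snd x = 0" using formQ[OF assms(1,3)] by blast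
  show ?thesis
  proof (intro allI impI conjI)
    fix r :: nat assume r: "r \<ge> 1"
    show c1: "cR p r = 0" using cR_zero[OF fp] r by simp
    show c2: "cA q r = 0" using cA_zero[OF fq] r by simp
    show "LL r = al r + cR q r" using walk_eq[OF vq] r c2 by force
    show "VV r = al r + cA p r" using walk_eq[OF vp] r c1 by force
  qed
qed

lemma walk_generic:
  assumes g: "\<forall>r\<ge>1. LL (Suc r) + VV (Suc r) - al (Suc r) \<le> al r"
    and a0: "al 0 = 0" and aL: "\<forall>r. al r \<le> LL r" and aV: "\<forall>r. al r \<le> VV r"
    and m0: "mu 0 = 0" and E0: "E 0 = 0"
    and c: "\<forall>r\<ge>1. al r + cR t r \<le> mu r \<and> mu r + cA t r \<le> LL r + VV r - al r \<and> mu r + cA t r = E r + cR t r"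
  shows "valid_walk mu t E"
  by (rule walk_box[OF box_ok[OF g] m0 E0 c])

lemma w_valid:
  assumes "inA al" "p \<in> Std s al VV" "q \<in> Std s LL al"
  shows "valid_walk LL (wmap p q) VV"
proof (cases "s = 1")
  case True
  have lp: "length p = 1" "length q = 1" using assms True by (auto simp: Std_def)
  then obtain x y where xy: "p = [x]" "q = [y]"
    by (metis One_nat_def length_0_conv length_Suc_conv)
  obtain i j where ij: "x = (0, j)" "y = (i, 0)"
    using formP[OF assms(1,2)] formQ[OF assms(1,3)] xy by (cases x, cases y) auto
  have vp: "valid_walk al [(0,j)] VV" and vq: "valid_walk LL [(i,0)] al"
    using assms xy ij by (auto simp: Std_def)
  show ?thesis using vp vq xy ij pVV(1) by (simp add: wmap_def)
next
  case False
  note A = A_facts[OF assms(1)]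
  have g: "\<forall>r\<ge>1. LL (Suc r) + VV (Suc r) - al (Suc r) \<le> al r"
    by (rule good_sh[OF False A])
  have lens: "length p = length q" using assms by (auto simp: Std_def)
  note e = pq_eqs[OF assms]
  show ?thesis
  proof (rule walk_generic[where al=al and mu=LL and E=VV, OF g A(1,2,3) LLv(1) VVv(1)], intro allI impI)
    fix r :: nat assume r: "r \<ge> 1"
    show "al r + cR (wmap p q) r \<le> LL r \<and> LL r + cA (wmap p q) r \<le> LL r + VV r - al r \<and>
          LL r + cA (wmap p q) r = VV r + cR (wmap p q) r"
      using e r cR_wmap[OF lens] cA_wmap[OF lens] by simp
  qed
qed

lemma phi_in:
  assumes "inA al" "p \<in> Std s al VV" "q \<in> Std s LL al"
  shows "phi p q \<in> StdPlus s la nu"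
proof -
  have lens: "length p = s" "length q = s" using assms by (auto simp: Std_def)
  have fw: "\<forall>x\<in>set (wmap p q). fst x \<noteq> 0 \<and> snd x \<noteq> 0"
    using formP[OF assms(1,2)] formQ[OF assms(1,3)] by (metis set_wmap fst_conv snd_conv)
  have "valid_walk (unsh LL) (map dec (wmap p q)) (unsh VV)"
    by (rule walk_unsh[OF w_valid[OF assms] fw])
  then have v: "valid_walk la (phi p q) nu" using unsh_shift[of la n, OF la0] unsh_shift[of nu n, OF nu0]
    by (simp add: phi_wmap)
  have len: "length (phi p q) = s" using lens by (simp add: phi_def)
  have cnt: "\<forall>i\<ge>1. cR (phi p q) i \<le> la i"
  proof (intro allI impI)
    fix i :: nat assume i: "i \<ge> 1"
    have "cR (phi p q) i = cR (wmap p q) (Suc i)" unfolding phi_wmap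
      by (rule cR_dec) (use fw in blast)
    also have "\<dots> = cR q (Suc i)" using cR_wmap lens by simp
    also have "\<dots> \<le> LL (Suc i)" using pq_eqs[OF assms] by simp
    also have "\<dots> = la i" using LLv(3) i by simp
    finally show "cR (phi p q) i \<le> la i" .
  qed
  show ?thesis using v len cnt pl unfolding StdPlus_def Std_def cR_def by auto
qed

lemma swap_pq:
  assumes "inA al" "p \<in> Std s al VV" "q \<in> Std s LL al" "1 \<le> k" "k \<le> s - 1"
  shows "swap_steps k p \<in> Std s al VV" "swap_steps k q \<in> Std s LL al"
proof -
  have s2: "s \<noteq> 1" using assms(4,5) by auto
  note A = A_facts[OF assms(1)]
  have g: "\<forall>r\<ge>1. LL (Suc r) + VV (Suc r) - al (Suc r) \<le> al r"
    by (rule good_sh[OF s2 A])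
  have lens: "length p = s" "length q = s" using assms by (auto simp: Std_def)
  have kl: "k < length p" "k < length q" using lens assms(4,5) by auto
  note e = pq_eqs[OF assms(1,2,3)]
  have pa: "is_partition al" using assms(1) by (simp add: inA_def)
  have "valid_walk al (swap_steps k p) VV"
  proof (rule walk_generic[where al=al and mu=al and E=VV, OF g A(1,2,3) A(1) VVv(1)], intro allI impI)
    fix r :: nat assume r: "r \<ge> 1"
    show "al r + cR (swap_steps k p) r \<le> al r \<and> al r + cA (swap_steps k p) r \<le> LL r + VV r - al r \<and>
          al r + cA (swap_steps k p) r = VV r + cR (swap_steps k p) r"
    proof -
      have er: "LL r = al r + cR q r" "VV r = al r + cA p r" "cR p r = 0" "cA q r = 0" using e r by auto
      then show ?thesis using cnt_swap[OF assms(4) kl(1)] by simp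
    qed
  qed
  then show "swap_steps k p \<in> Std s al VV" using cnt_swap(3)[OF assms(4) kl(1)] lens pa by (simp add: Std_def)
  have "valid_walk LL (swap_steps k q) al"
  proof (rule walk_generic[where al=al and mu=LL and E=al, OF g A(1,2,3) LLv(1) A(1)], intro allI impI)
    fix r :: nat assume r: "r \<ge> 1"
    show "al r + cR (swap_steps k q) r \<le> LL r \<and> LL r + cA (swap_steps k q) r \<le> LL r + VV r - al r \<and>
          LL r + cA (swap_steps k q) r = al r + cR (swap_steps k q) r"
    proof -
      have er: "LL r = al r + cR q r" "VV r = al r + cA p r" "cR p r = 0" "cA q r = 0" using e r by auto
      then show ?thesis using cnt_swap[OF assms(4) kl(2)] by simp
    qed
  qed
  then show "swap_steps k q \<in> Std s LL al" using cnt_swap(3)[OF assms(4) kl(2)] lens pLL(1) by (simp add: Std_def)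
qed

lemma surj:
  assumes u: "u \<in> StdPlus s la nu"
  shows "\<exists>al p q. inA al \<and> p \<in> Std s al VV \<and> q \<in> Std s LL al \<and> phi p q = u"
proof -
  have lu: "length u = s" and vu: "valid_walk la u nu" and cu: "\<forall>i\<ge>1. cR u i \<le> la i"
    using u unfolding StdPlus_def Std_def cR_def by auto
  define p where "p = pmk u"
  define q where "q = qmk u"
  define al where "al = (\<lambda>r. if r = 0 then 0 else LL r - cR q r)"
  have lp: "length p = s" "length q = s" using lu by (auto simp: p_def q_def pmk_def qmk_def)
  have eqU: "\<forall>r\<ge>1. la r + cA u r = nu r + cR u r" using walk_eq[OF vu] by blast
  have szU: "psize nu + nz1 u = psize la + nz2 u" by (rule walk_size[OF pl vu])
  have R0: "nz1 u + cR u 0 = s" "nz2 u + cA u 0 = s" using nz1_cR[of u] nz2_cA[of u] lu by auto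
  have RA0: "psize nu + cA u 0 = psize la + cR u 0" using szU R0 by linarith
  have R0s: "cR u 0 \<le> s" "cA u 0 \<le> s" using cR_le[of u 0] cA_le[of u 0] lu by auto
  have cq: "\<And>r. r \<ge> 1 \<Longrightarrow> cR q r \<le> LL r"
  proof -
    fix r :: nat assume r: "r \<ge> 1"
    then obtain i where i: "r = Suc i" by (cases r) auto
    show "cR q r \<le> LL r"
    proof (cases "i = 0")
      case True then show ?thesis using i R0s nbig LLv(2) by (simp add: q_def qmk_cR)
    next
      case False then show ?thesis using i cu LLv(3)[of i] by (simp add: q_def qmk_cR)
    qed
  qed
  have alq: "\<And>r. r \<ge> 1 \<Longrightarrow> al r + cR q r = LL r" using cq by (simp add: al_def)
  have alp: "\<And>r. r \<ge> 1 \<Longrightarrow> al r + cA p r = VV r"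
  proof -
    fix r :: nat assume r: "r \<ge> 1"
    then obtain i where i: "r = Suc i" by (cases r) auto
    show "al r + cA p r = VV r"
    proof (cases "i = 0")
      case True
      then show ?thesis using i R0s nbig LLv(2) VVv(2) RA0
        by (simp add: al_def p_def q_def qmk_cR pmk_cA)
    next
      case False
      then have "i \<ge> 1" by simp
      then show ?thesis using i cu eqU LLv(3)[of i] VVv(3)[of i]
        by (simp add: al_def p_def q_def qmk_cR pmk_cA)
    qed
  qed
  have a0: "al 0 = 0" by (simp add: al_def)
  have aL: "\<forall>r. al r \<le> LL r" by (simp add: al_def)
  have aV: "\<forall>r. al r \<le> VV r"
  proof
    fix r show "al r \<le> VV r"
    proof (cases "r = 0")
      case False
      then have "al r + cA p r = VV r" using alp[of r] by simp
      then show ?thesis by linarith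
    qed (simp add: al_def)
  qed
  have bu: "\<And>r. r \<ge> 1 \<Longrightarrow> unsh al r + cR u r = la r"
  proof -
    fix r :: nat assume r: "r \<ge> 1"
    have "al (Suc r) + cR q (Suc r) = LL (Suc r)" using alq[of "Suc r"] by simp
    then show "unsh al r + cR u r = la r" using r LLv(3)[OF r] by (simp add: unsh_def q_def qmk_cR)
  qed
  have bv: "\<And>r. r \<ge> 1 \<Longrightarrow> unsh al r + cA u r = nu r"
  proof -
    fix r :: nat assume r: "r \<ge> 1"
    have "al (Suc r) + cA p (Suc r) = VV (Suc r)" using alp[of "Suc r"] by simp
    then show "unsh al r + cA u r = nu r" using r VVv(3)[OF r] by (simp add: unsh_def p_def pmk_cA)
  qed
  have bl: "\<forall>r. unsh al r \<le> la r"
  proof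
    fix r show "unsh al r \<le> la r"
    proof (cases "r = 0")
      case False then have "unsh al r + cR u r = la r" using bu by simp
      then show ?thesis by linarith
    qed (simp add: unsh_def)
  qed
  have bn: "\<forall>r. unsh al r \<le> nu r"
  proof
    fix r show "unsh al r \<le> nu r"
    proof (cases "r = 0")
      case False then have "unsh al r + cA u r = nu r" using bv by simp
      then show ?thesis by linarith
    qed (simp add: unsh_def)
  qed
  have sl: "psize la \<le> psize (unsh al) + s"
  proof -
    have "int (psize la) - int (psize (unsh al)) = (\<Sum>r\<in>{r. la r \<noteq> 0}. int (la r) - int (unsh al r))"
      by (rule psize_diff[OF bl finl]) simp
    also have "\<dots> = (\<Sum>r\<in>{r. la r \<noteq> 0}. int (cR u r))"
    proof (rule sum.cong)
      fix r assume "r \<in> {r. la r \<noteq> 0}"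
      then have "r \<ge> 1" using la0 by (cases r) auto
      then show "int (la r) - int (unsh al r) = int (cR u r)" using bu[of r] by linarith
    qed simp
    also have "\<dots> = int (\<Sum>r\<in>{r. la r \<noteq> 0}. cR u r)" by simp
    also have "\<dots> \<le> int s" using sum_cR[OF finl, of u] by (simp only: of_nat_le_iff lu)
    finally show ?thesis by linarith
  qed
  have sn: "psize nu \<le> psize (unsh al) + s"
  proof -
    have "int (psize nu) - int (psize (unsh al)) = (\<Sum>r\<in>{r. nu r \<noteq> 0}. int (nu r) - int (unsh al r))"
      by (rule psize_diff[OF bn finn]) simp
    also have "\<dots> = (\<Sum>r\<in>{r. nu r \<noteq> 0}. int (cA u r))"
    proof (rule sum.cong)
      fix r assume "r \<in> {r. nu r \<noteq> 0}"
      then have "r \<ge> 1" using nu0 by (cases r) auto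
      then show "int (nu r) - int (unsh al r) = int (cA u r)" using bv[of r] by linarith
    qed simp
    also have "\<dots> = int (\<Sum>r\<in>{r. nu r \<noteq> 0}. cA u r)" by simp
    also have "\<dots> \<le> int s" using sum_cA[OF finn, of u] by (simp only: of_nat_le_iff lu)
    finally show ?thesis by linarith
  qed
  have a1: "la 1 + nu 1 \<le> al 1"
    using R0s nbig LLv(2) by (simp add: al_def q_def qmk_cR)
  have fq: "\<forall>x\<in>set q. fst x \<noteq> 0 \<and> snd x = 0" by (auto simp: q_def qmk_def)
  have vpq: "is_partition al \<and> valid_walk LL q al \<and> valid_walk al p VV"
  proof (cases "s = 1")
    case False
    have g: "\<forall>r\<ge>1. LL (Suc r) + VV (Suc r) - al (Suc r) \<le> al r"
      by (rule good_sh[OF False a0 aL aV sl sn a1])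
    have pa: "is_partition al"
    proof (rule box_ok[where al=al and x=al, OF g a0], intro allI impI conjI)
      fix r :: nat
      have "al r \<le> LL r" "al r \<le> VV r" using aL aV by auto
      then show "al r \<le> LL r + VV r - al r" by linarith
    qed simp
    have vq: "valid_walk LL q al"
    proof (rule walk_generic[where al=al and mu=LL and E=al, OF g a0 aL aV LLv(1) a0], intro allI impI)
      fix r :: nat assume r: "r \<ge> 1"
      have "cA q r = 0" using r by (simp add: q_def qmk_cA)
      then show "al r + cR q r \<le> LL r \<and> LL r + cA q r \<le> LL r + VV r - al r \<and> LL r + cA q r = al r + cR q r"
        using alq[OF r] aV by (simp add: le_diff_conv2 trans_le_add1 add.commute)
    qed
    have vp: "valid_walk al p VV"
    proof (rule walk_generic[where al=al and mu=al and E=VV, OF g a0 aL aV a0 VVv(1)], intro allI impI)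
      fix r :: nat assume r: "r \<ge> 1"
      have "cR p r = 0" using r by (simp add: p_def pmk_cR)
      then show "al r + cR p r \<le> al r \<and> al r + cA p r \<le> LL r + VV r - al r \<and> al r + cA p r = VV r + cR p r"
        using alp[OF r] aL by (simp add: le_diff_conv2 trans_le_add1 add.commute)
    qed
    show ?thesis using pa vq vp by blast
  next
    case True
    then obtain x where x: "u = [x]" using lu by (metis One_nat_def length_0_conv length_Suc_conv)
    obtain i j where ij: "x = (i, j)" by (cases x)
    have pq: "p = [(0, Suc j)]" "q = [(Suc i, 0)]" using x ij by (auto simp: p_def q_def pmk_def qmk_def)
    have vr: "is_partition (rem_box la i)" using vu x ij by simp
    have aeq: "al = rem_box LL (Suc i)"
    proof
      fix r show "al r = rem_box LL (Suc i) r" using pq LLv(1) by (auto simp: al_def rem_box_app)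
    qed
    have pa: "is_partition al"
    proof (rule part_unsh)
      show "al 0 = 0" by (rule a0)
      have "al 2 \<le> LL 2" using aL by blast
      also have "LL 2 = la 1" using LLv(3)[of 1] by (simp add: numeral_2_eq_2)
      finally show "al 2 \<le> al 1" using a1 by linarith
      have "unsh al = rem_box (unsh LL) i" using aeq unsh_rem by simp
      then show "is_partition (unsh al)" using unsh_shift[of la n, OF la0] vr by simp
    qed
    have vq: "valid_walk LL q al"
      using pq aeq pa alq[of "Suc i"] by (simp add: q_def qmk_cR)
    have veq: "add_box al (Suc j) = VV"
    proof
      fix r show "add_box al (Suc j) r = VV r"
      proof (cases "r = 0")
        case True then show ?thesis using a0 VVv(1) by (simp add: add_box_app)
      next
        case False
        then have "al r + cA p r = VV r" using alp by simp
        then show ?thesis using pq by (auto simp: add_box_app)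
      qed
    qed
    have vp: "valid_walk al p VV" using pq veq pVV(1) pa by simp
    show ?thesis using pa vq vp by blast
  qed
  have "psize al + nz1 q = psize LL + nz2 q" using walk_size[OF pLL(1)] vpq by blast
  moreover have "nz1 q = s" "nz2 q = 0" using lp fq unfolding nz1_def nz2_def
    by (simp_all add: filter_empty_conv)
  ultimately have sa: "psize al = n - s" using pLL(2) by simp
  have "inA al" using vpq sa aL aV unfolding inA_def psubseteq_def pinter_def by auto
  moreover have "p \<in> Std s al VV" "q \<in> Std s LL al" using vpq lp pLL(1) by (auto simp: Std_def)
  moreover have "phi p q = u" unfolding p_def q_def by (rule phi_mk)
  ultimately show ?thesis by blast
qed

lemma inj:
  assumes "inA al" "p \<in> Std s al VV" "q \<in> Std s LL al"
    "inA al'" "p' \<in> Std s al' VV" "q' \<in> Std s LL al'" "phi p q = phi p' q'"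
  shows "al = al' \<and> p = p' \<and> q = q'"
proof -
  have lens: "length p = s" "length q = s" "length p' = s" "length q' = s" using assms by (auto simp: Std_def)
  have fp: "\<forall>x\<in>set p. fst x = 0 \<and> snd x \<noteq> 0" by (rule formP[OF assms(1,2)])
  have fq: "\<forall>x\<in>set q. fst x \<noteq> 0 \<and> snd x = 0" by (rule formQ[OF assms(1,3)])
  have fp': "\<forall>x\<in>set p'. fst x = 0 \<and> snd x \<noteq> 0" by (rule formP[OF assms(4,5)])
  have fq': "\<forall>x\<in>set q'. fst x \<noteq> 0 \<and> snd x = 0" by (rule formQ[OF assms(4,6)])
  have nth: "\<And>l. l < s \<Longrightarrow> fst (q ! l) - 1 = fst (q' ! l) - 1 \<and> snd (p ! l) - 1 = snd (p' ! l) - 1"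
  proof -
    fix l assume l: "l < s"
    have "phi p q ! l = phi p' q' ! l" using assms(7) by simp
    then show "fst (q ! l) - 1 = fst (q' ! l) - 1 \<and> snd (p ! l) - 1 = snd (p' ! l) - 1"
      using l lens by (simp add: phi_def)
  qed
  have "p = p'"
  proof (rule nth_equalityI)
    show "length p = length p'" using lens by simp
    fix l assume l: "l < length p"
    have "p ! l \<in> set p" "p' ! l \<in> set p'" using l lens by auto
    then show "p ! l = p' ! l" using fp fp' nth[of l] l lens by (metis prod.collapse Suc_pred' not_gr0)
  qed
  moreover have "q = q'"
  proof (rule nth_equalityI)
    show "length q = length q'" using lens by simp
    fix l assume l: "l < length q"
    have "q ! l \<in> set q" "q' ! l \<in> set q'" using l lens by auto
    then show "q ! l = q' ! l" using fq fq' nth[of l] l lens by (metis prod.collapse Suc_pred' not_gr0)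
  qed
  moreover have "al = al'"
    using walk_det assms(3,6) \<open>q = q'\<close> by (auto simp: Std_def)
  ultimately show ?thesis by blast
qed

lemma inA_iff: "(is_partition al \<and> psize al = n - s \<and> psubseteq al (pinter LL VV)) = inA al"
  by (simp add: inA_def)

lemma main_n:
  "let A = {al. is_partition al \<and> psize al = n - s \<and>
                  psubseteq al (pinter (shift_part n la) (shift_part n nu))};
         D = (SIGMA al:A. Std s al (shift_part n nu) \<times> Std s (shift_part n la) al)
     in
      (\<forall>al\<in>A. \<forall>p\<in>Std s al (shift_part n nu). \<forall>l<s. fst (p ! l) = 0 \<and> 1 \<le> snd (p ! l)) \<and>
      (\<forall>al\<in>A. \<forall>q\<in>Std s (shift_part n la) al. \<forall>l<s. 1 \<le> fst (q ! l) \<and> snd (q ! l) = 0) \<and>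
      bij_betw (\<lambda>(al, p, q). phi p q) D (StdPlus s la nu) \<and>
      (\<forall>(al, p, q)\<in>D. \<forall>k. 1 \<le> k \<and> k \<le> s - 1 \<longrightarrow>
          swap_steps k p \<in> Std s al (shift_part n nu) \<and>
          swap_steps k q \<in> Std s (shift_part n la) al \<and>
          phi (swap_steps k p) (swap_steps k q) = swap_steps k (phi p q) \<and>
          swap_steps k (phi p q) \<in> StdPlus s la nu) \<and>
      (\<forall>u\<in>StdZero s la nu. \<forall>k. 1 \<le> k \<and> k \<le> s - 1 \<longrightarrow>
          swap_steps k u \<in> Std s la nu)"
proof -
  let ?A = "{al. inA al}"
  let ?D = "SIGMA al:?A. Std s al VV \<times> Std s LL al"
  have c1: "\<forall>al\<in>?A. \<forall>p\<in>Std s al VV. \<forall>l<s. fst (p ! l) = 0 \<and> 1 \<le> snd (p ! l)"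
  proof (intro ballI allI impI)
    fix al p l assume a: "al \<in> ?A" "p \<in> Std s al VV" "l < s"
    have "p ! l \<in> set p" using a by (auto simp: Std_def)
    then show "fst (p ! l) = 0 \<and> 1 \<le> snd (p ! l)" using formP[of al p] a by fastforce
  qed
  have c2: "\<forall>al\<in>?A. \<forall>q\<in>Std s LL al. \<forall>l<s. 1 \<le> fst (q ! l) \<and> snd (q ! l) = 0"
  proof (intro ballI allI impI)
    fix al q l assume a: "al \<in> ?A" "q \<in> Std s LL al" "l < s"
    have "q ! l \<in> set q" using a by (auto simp: Std_def)
    then show "1 \<le> fst (q ! l) \<and> snd (q ! l) = 0" using formQ[of al q] a by fastforce
  qed
  have c3: "bij_betw (\<lambda>(al, p, q). phi p q) ?D (StdPlus s la nu)"
    unfolding bij_betw_def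
  proof (intro conjI)
    show "inj_on (\<lambda>(al, p, q). phi p q) ?D"
      unfolding inj_on_def using inj by fastforce
    show "(\<lambda>(al, p, q). phi p q) ` ?D = StdPlus s la nu"
    proof
      show "(\<lambda>(al, p, q). phi p q) ` ?D \<subseteq> StdPlus s la nu"
        using phi_in by auto
      show "StdPlus s la nu \<subseteq> (\<lambda>(al, p, q). phi p q) ` ?D"
      proof
        fix u assume "u \<in> StdPlus s la nu"
        then obtain al p q where "inA al" "p \<in> Std s al VV" "q \<in> Std s LL al" "phi p q = u"
          using surj by blast
        then show "u \<in> (\<lambda>(al, p, q). phi p q) ` ?D"
          by (intro image_eqI[of _ _ "(al, p, q)"]) auto
      qed
    qed
  qed
  have c4': "\<And>al p q k. (al, p, q) \<in> ?D \<Longrightarrow> 1 \<le> k \<and> k \<le> s - 1 \<Longrightarrow>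
          swap_steps k p \<in> Std s al VV \<and> swap_steps k q \<in> Std s LL al \<and>
          phi (swap_steps k p) (swap_steps k q) = swap_steps k (phi p q) \<and>
          swap_steps k (phi p q) \<in> StdPlus s la nu"
  proof -
    fix al p q k assume x: "(al, p, q) \<in> ?D" and k: "1 \<le> k \<and> k \<le> s - 1"
    have a: "inA al" "p \<in> Std s al VV" "q \<in> Std s LL al" using x by auto
    have lens: "length p = s" "length q = s" using a by (auto simp: Std_def)
    have sp: "swap_steps k p \<in> Std s al VV" "swap_steps k q \<in> Std s LL al"
      using swap_pq[OF a] k by auto
    have ph: "phi (swap_steps k p) (swap_steps k q) = swap_steps k (phi p q)"
      by (rule phi_swap) (use lens k in auto)
    have "phi (swap_steps k p) (swap_steps k q) \<in> StdPlus s la nu" by (rule phi_in[OF a(1) sp])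
    then show "swap_steps k p \<in> Std s al VV \<and> swap_steps k q \<in> Std s LL al \<and>
          phi (swap_steps k p) (swap_steps k q) = swap_steps k (phi p q) \<and>
          swap_steps k (phi p q) \<in> StdPlus s la nu"
      using sp ph by simp
  qed
  have c4: "\<forall>(al, p, q)\<in>?D. \<forall>k. 1 \<le> k \<and> k \<le> s - 1 \<longrightarrow>
          swap_steps k p \<in> Std s al VV \<and> swap_steps k q \<in> Std s LL al \<and>
          phi (swap_steps k p) (swap_steps k q) = swap_steps k (phi p q) \<and>
          swap_steps k (phi p q) \<in> StdPlus s la nu"
  proof (rule ballI)
    fix x assume "x \<in> ?D"
    then show "case x of (al, p, q) \<Rightarrow> \<forall>k. 1 \<le> k \<and> k \<le> s - 1 \<longrightarrow>
          swap_steps k p \<in> Std s al VV \<and> swap_steps k q \<in> Std s LL al \<and>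
          phi (swap_steps k p) (swap_steps k q) = swap_steps k (phi p q) \<and>
          swap_steps k (phi p q) \<in> StdPlus s la nu"
      using c4' by (cases x) auto
  qed
  have c5: "\<forall>u\<in>StdZero s la nu. \<forall>k. 1 \<le> k \<and> k \<le> s - 1 \<longrightarrow> swap_steps k u \<in> Std s la nu"
  proof (intro ballI allI impI)
    fix u k assume u: "u \<in> StdZero s la nu" and k: "1 \<le> k \<and> k \<le> s - 1"
    have "u \<in> StdPlus s la nu" using u by (simp add: StdZero_def)
    then obtain al p q where a: "inA al" "p \<in> Std s al VV" "q \<in> Std s LL al" and pu: "phi p q = u"
      using surj by blast
    have lens: "length p = s" "length q = s" using a by (auto simp: Std_def)
    have sp: "swap_steps k p \<in> Std s al VV" "swap_steps k q \<in> Std s LL al"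
      using swap_pq[OF a] k by auto
    have ph: "phi (swap_steps k p) (swap_steps k q) = swap_steps k (phi p q)"
      by (rule phi_swap) (use lens k in auto)
    have "phi (swap_steps k p) (swap_steps k q) \<in> StdPlus s la nu" by (rule phi_in[OF a(1) sp])
    then show "swap_steps k u \<in> Std s la nu" using ph pu by (simp add: StdPlus_def)
  qed
  show ?thesis unfolding Let_def mem_Collect_eq inA_iff using c1 c2 c3 c4 c5 by blast
qed

end

theorem lemma4p20:
  fixes la nu :: partition and s :: nat
  assumes "co_Pieri la nu s"
  shows "\<exists>N. \<forall>n\<ge>N.
    (let A = {al. is_partition al \<and> psize al = n - s \<and>
                  psubseteq al (pinter (shift_part n la) (shift_part n nu))};
         D = (SIGMA al:A. Std s al (shift_part n nu) \<times> Std s (shift_part n la) al)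
     in
      (\<forall>al\<in>A. \<forall>p\<in>Std s al (shift_part n nu). \<forall>l<s. fst (p ! l) = 0 \<and> 1 \<le> snd (p ! l)) \<and>
      (\<forall>al\<in>A. \<forall>q\<in>Std s (shift_part n la) al. \<forall>l<s. 1 \<le> fst (q ! l) \<and> snd (q ! l) = 0) \<and>
      bij_betw (\<lambda>(al, p, q). phi p q) D (StdPlus s la nu) \<and>
      (\<forall>(al, p, q)\<in>D. \<forall>k. 1 \<le> k \<and> k \<le> s - 1 \<longrightarrow>
          swap_steps k p \<in> Std s al (shift_part n nu) \<and>
          swap_steps k q \<in> Std s (shift_part n la) al \<and>
          phi (swap_steps k p) (swap_steps k q) = swap_steps k (phi p q) \<and>
          swap_steps k (phi p q) \<in> StdPlus s la nu) \<and>
      (\<forall>u\<in>StdZero s la nu. \<forall>k. 1 \<le> k \<and> k \<le> s - 1 \<longrightarrow>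
          swap_steps k u \<in> Std s la nu))"
proof (intro exI allI impI)
  fix n assume "psize la + psize nu + s + la 1 + nu 1 \<le> n"
  then show "let A = {al. is_partition al \<and> psize al = n - s \<and>
                  psubseteq al (pinter (shift_part n la) (shift_part n nu))};
         D = (SIGMA al:A. Std s al (shift_part n nu) \<times> Std s (shift_part n la) al)
     in
      (\<forall>al\<in>A. \<forall>p\<in>Std s al (shift_part n nu). \<forall>l<s. fst (p ! l) = 0 \<and> 1 \<le> snd (p ! l)) \<and>
      (\<forall>al\<in>A. \<forall>q\<in>Std s (shift_part n la) al. \<forall>l<s. 1 \<le> fst (q ! l) \<and> snd (q ! l) = 0) \<and>
      bij_betw (\<lambda>(al, p, q). phi p q) D (StdPlus s la nu) \<and>
      (\<forall>(al, p, q)\<in>D. \<forall>k. 1 \<le> k \<and> k \<le> s - 1 \<longrightarrow>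
          swap_steps k p \<in> Std s al (shift_part n nu) \<and>
          swap_steps k q \<in> Std s (shift_part n la) al \<and>
          phi (swap_steps k p) (swap_steps k q) = swap_steps k (phi p q) \<and>
          swap_steps k (phi p q) \<in> StdPlus s la nu) \<and>
      (\<forall>u\<in>StdZero s la nu. \<forall>k. 1 \<le> k \<and> k \<le> s - 1 \<longrightarrow>
          swap_steps k u \<in> Std s la nu)"
    by (rule main_n[OF assms])
qed



end
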